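(* Consider the stochastic learning dynamics described in the context, with $K\ge 2$ arms, Poisson clock rate $\lambda>0$, and parameters $1\ge p_1>p_2\ge\cdots\ge p_K\ge 0$. For any $\delta\in(0,1]$, $\mu\in(0,1]$, $p_1\in(0,1]$ and $p_2\neq 0$, the success event $E^N=\{\lim_{t\to\infty}X^N(t)=(0,N,0,\dots,0)\}$ satisfies \[ \mathbb{P}\{E^N\}\ \ge\ 1-\Big(\frac{p_1}{p_2}\Big)^{-(1-\delta)\frac{\mu p_1}{K e}N}-e^{-\frac{\mu p_1}{K e}\frac{\delta^2}{2}N}, \] where $e\approx 2.7183$ is Euler's number.
   Context: Learning dynamics: there are $K\ge 2$ arms; each pull of arm $k\in\{1,\dots,K\}$ yields an independent Bernoulli$(p_k)$ reward, where $1\ge p_1>p_2\ge\cdots\ge p_K\ge 0$ (arm 1 is the unique best arm); a "null arm" $0$ always yields reward $0$. There are $N$ individuals, each with an independent Poisson clock of rate $\lambda>0$ and a memory variable $M\in\{0,1,\dots,K\}$, initially $M=0$ for every individual. Fix $\mu\in(0,1]$. When an individual's clock ticks, it selects an arm $c\in\{0,\dots,K\}$ as follows: if its $M=0$, then with probability $\mu$ it sets $c$ uniformly at random in $\{1,\dots,K\}$, and with probability $1-\mu$ it picks a peer uniformly at random among all $N$ individuals (including itself) and sets $c$ to that peer's memory value; if its $M\neq 0$, it always picks a peer uniformly at random (including itself) and sets $c$ to that peer's memory value. It then pulls arm $c$, and if the reward is $1$ it sets $M\leftarrow c$ (otherwise $M$ is unchanged). Let $X^N(t)=(X^N_0(t),\dots,X^N_K(t))$,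 where $X^N_k(t)$ is the number of individuals whose memory equals $k$ at time $t$; $X^N(0)=(N,0,\dots,0)$. Equivalently, $X^N$ is the continuous-time Markov chain on nonnegative integer vectors summing to $N$ that, from state $s$, jumps to $s+e^k$ at rate $s_0\lambda(\frac{\mu}{K}+(1-\mu)\frac{s_k}{N})p_k$ for $k=1,\dots,K$, and to $s+e^k-e^{k'}$ at rate $s_{k'}\lambda\frac{s_k}{N}p_k$ for distinct $k,k'\in\{1,\dots,K\}$, where $e^k$ is the $k$-th unit vector (coordinates indexed from $0$). *)

theory Defs
  imports "HOL-Probability.Probability"
begin

text \<open>States: functions s :: nat => nat with s i = number of individuals with memory i,
  supported on {0..K} and summing to N.\<close>

definition states :: "nat \<Rightarrow> nat \<Rightarrow> (nat \<Rightarrow> nat) set" where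
  "states K N = {s. (\<forall>i>K. s i = 0) \<and> (\<Sum>i\<le>K. s i) = N}"

definition mv :: "(nat \<Rightarrow> nat) \<Rightarrow> nat \<Rightarrow> nat \<Rightarrow> (nat \<Rightarrow> nat)" where
  "mv s k' k = (\<lambda>i. if i = k then s i + 1 else if i = k' then s i - 1 else s i)"

definition rate :: "nat \<Rightarrow> nat \<Rightarrow> real \<Rightarrow> real \<Rightarrow> (nat \<Rightarrow> real)
    \<Rightarrow> (nat \<Rightarrow> nat) \<Rightarrow> (nat \<Rightarrow> nat) \<Rightarrow> real" where
  "rate K N lam mu p s s' =
     (\<Sum>k\<in>{1..K}. if s' = mv s 0 k
        then real (s 0) * lam * (mu / real K + (1 - mu) * (real (s k) / real N)) * p k else 0)
   + (\<Sum>k\<in>{1..K}. \<Sum>k'\<in>{1..K} - {k}. if s' = mv s k' k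
        then real (s k') * lam * (real (s k) / real N) * p k else 0)"

definition gen :: "nat \<Rightarrow> nat \<Rightarrow> real \<Rightarrow> real \<Rightarrow> (nat \<Rightarrow> real)
    \<Rightarrow> (nat \<Rightarrow> nat) \<Rightarrow> (nat \<Rightarrow> nat) \<Rightarrow> real" where
  "gen K N lam mu p s s' =
     (if s = s' then - (\<Sum>u\<in>states K N - {s}. rate K N lam mu p s u)
      else rate K N lam mu p s s')"

fun mpow :: "'s set \<Rightarrow> ('s \<Rightarrow> 's \<Rightarrow> real) \<Rightarrow> nat \<Rightarrow> 's \<Rightarrow> 's \<Rightarrow> real" where
  "mpow S Q 0 s s' = (if s = s' then 1 else 0)"
| "mpow S Q (Suc n) s s' = (\<Sum>u\<in>S. mpow S Q n s u * Q u s')"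

definition trans_fun :: "'s set \<Rightarrow> ('s \<Rightarrow> 's \<Rightarrow> real) \<Rightarrow> real \<Rightarrow> 's \<Rightarrow> 's \<Rightarrow> real" where
  "trans_fun S Q t s s' = (\<Sum>n. t ^ n / fact n * mpow S Q n s s')"

definition is_ctmc :: "'a measure \<Rightarrow> 's set \<Rightarrow> ('s \<Rightarrow> 's \<Rightarrow> real) \<Rightarrow> 's
    \<Rightarrow> (real \<Rightarrow> 'a \<Rightarrow> 's) \<Rightarrow> bool" where
  "is_ctmc M S Q x0 X \<longleftrightarrow>
     prob_space M \<and>
     (\<forall>t\<ge>0. \<forall>s. {\<omega>\<in>space M. X t \<omega> = s} \<in> sets M) \<and>
     (\<forall>\<omega>\<in>space M. \<forall>t\<ge>0. X t \<omega> \<in> S) \<and>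
     (\<forall>\<omega>\<in>space M. \<forall>t\<ge>0. \<exists>\<epsilon>>0. \<forall>u. t \<le> u \<and> u < t + \<epsilon> \<longrightarrow> X u \<omega> = X t \<omega>) \<and>
     (\<forall>n (ts :: nat \<Rightarrow> real) (ss :: nat \<Rightarrow> 's).
        ts 0 = 0 \<and> (\<forall>i<n. ts i \<le> ts (Suc i)) \<and> (\<forall>i\<le>n. ss i \<in> S) \<longrightarrow>
        measure M {\<omega>\<in>space M. \<forall>i\<le>n. X (ts i) \<omega> = ss i}
          = (if ss 0 = x0 then 1 else 0) *
            (\<Prod>i<n. trans_fun S Q (ts (Suc i) - ts i) (ss i) (ss (Suc i))))"

definition is_learning_chain :: "nat \<Rightarrow> nat \<Rightarrow> real \<Rightarrow> real \<Rightarrow> (nat \<Rightarrow> real)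
    \<Rightarrow> 'a measure \<Rightarrow> (real \<Rightarrow> 'a \<Rightarrow> (nat \<Rightarrow> nat)) \<Rightarrow> bool" where
  "is_learning_chain K N lam mu p M X \<longleftrightarrow>
     is_ctmc M (states K N) (gen K N lam mu p) (\<lambda>i. if i = 0 then N else 0) X"

definition target :: "nat \<Rightarrow> (nat \<Rightarrow> nat)" where
  "target N = (\<lambda>i. if i = 1 then N else 0)"

end

theory Submission
  imports Defs
begin


lemma mpow_bound:
  assumes fin: "finite S" and L1: "1 \<le> L" and LQ: "\<And>y. y \<in> S \<Longrightarrow> (\<Sum>u\<in>S. \<bar>Q u y\<bar>) \<le> L"
  shows "y \<in> S \<Longrightarrow> \<bar>mpow S Q n x y\<bar> \<le> L ^ n"
proof (induction n arbitrary: y)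
  case 0
  then show ?case by simp
next
  case (Suc n)
  have "\<bar>mpow S Q (Suc n) x y\<bar> \<le> (\<Sum>u\<in>S. \<bar>mpow S Q n x u\<bar> * \<bar>Q u y\<bar>)"
    by (simp add: abs_mult[symmetric] sum_abs)
  also have "\<dots> \<le> (\<Sum>u\<in>S. L ^ n * \<bar>Q u y\<bar>)"
    by (intro sum_mono mult_right_mono Suc.IH) auto
  also have "\<dots> = L ^ n * (\<Sum>u\<in>S. \<bar>Q u y\<bar>)" by (simp add: sum_distrib_left)
  also have "\<dots> \<le> L ^ n * L"
    using LQ[OF Suc.prems] L1 by (intro mult_left_mono) auto
  finally show ?case by (simp add: mult.commute)
qed

lemma trans_fun_series:
  "trans_fun S Q t x u = (\<Sum>n. (mpow S Q n x u / fact n) * t ^ n)"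
  unfolding trans_fun_def by (simp add: mult.commute)

lemma trans_fun_summable:
  assumes fin: "finite S" and L1: "1 \<le> L" and LQ: "\<And>y. y \<in> S \<Longrightarrow> (\<Sum>u\<in>S. \<bar>Q u y\<bar>) \<le> L"
    and u: "u \<in> S"
  shows "summable (\<lambda>n. (mpow S Q n x u / fact n) * t ^ n)"
proof (rule summable_comparison_test')
  show "summable (\<lambda>n. inverse (fact n) * (L * \<bar>t\<bar>) ^ n)" by (rule summable_exp)
  fix n
  have "norm ((mpow S Q n x u / fact n) * t ^ n) = \<bar>mpow S Q n x u\<bar> * \<bar>t\<bar> ^ n / fact n"
    by (simp add: abs_mult power_abs)
  also have "\<dots> \<le> L ^ n * \<bar>t\<bar> ^ n / fact n"
    by (intro divide_right_mono mult_right_mono mpow_bound[OF fin L1 LQ u]) auto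
  also have "\<dots> = inverse (fact n) * (L * \<bar>t\<bar>) ^ n" by (simp add: power_mult_distrib field_simps)
  finally show "norm ((mpow S Q n x u / fact n) * t ^ n) \<le> inverse (fact n) * (L * \<bar>t\<bar>) ^ n" .
qed

lemma trans_fun_deriv:
  assumes fin: "finite S" and y: "y \<in> S"
  shows "((\<lambda>t. trans_fun S Q t x y) has_real_derivative (\<Sum>u\<in>S. trans_fun S Q t x u * Q u y)) (at t)"
proof -
  define L where "L = (\<Sum>u\<in>S. \<Sum>w\<in>S. \<bar>Q u w\<bar>) + 1"
  have L1: "1 \<le> L" unfolding L_def by (auto intro!: sum_nonneg)
  have LQ: "(\<Sum>u\<in>S. \<bar>Q u y\<bar>) \<le> L" if "y \<in> S" for y
  proof -
    have "(\<Sum>u\<in>S. \<bar>Q u y\<bar>) \<le> (\<Sum>u\<in>S. \<Sum>w\<in>S. \<bar>Q u w\<bar>)"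
      by (intro sum_mono member_le_sum) (use that fin in auto)
    then show ?thesis unfolding L_def by simp
  qed
  have sm: "summable (\<lambda>n. (mpow S Q n x u / fact n) * t ^ n)" if "u \<in> S" for u t
    using trans_fun_summable[OF fin L1 _ that, of Q] LQ by blast
  define c where "c n = mpow S Q n x y / fact n" for n
  have "((\<lambda>t. \<Sum>n. c n * t ^ n) has_real_derivative (\<Sum>n. diffs c n * t ^ n)) (at t)"
    by (rule termdiffs_strong_converges_everywhere) (use sm[OF y] in \<open>simp add: c_def\<close>)
  moreover have "(\<lambda>t. \<Sum>n. c n * t ^ n) = (\<lambda>t. trans_fun S Q t x y)"
    by (simp add: c_def trans_fun_series)
  moreover have "(\<Sum>n. diffs c n * t ^ n) = (\<Sum>u\<in>S. trans_fun S Q t x u * Q u y)"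
  proof -
    have "diffs c n * t ^ n = (\<Sum>u\<in>S. (mpow S Q n x u / fact n * t ^ n) * Q u y)" for n
    proof -
      have "diffs c n = mpow S Q (Suc n) x y / fact n"
        unfolding diffs_def c_def by (simp add: fact_Suc del: mpow.simps)
      then show ?thesis
        by (simp add: sum_divide_distrib sum_distrib_right sum_distrib_left mult_ac)
    qed
    then have "(\<Sum>n. diffs c n * t ^ n) = (\<Sum>n. \<Sum>u\<in>S. (mpow S Q n x u / fact n * t ^ n) * Q u y)"
      by simp
    also have "\<dots> = (\<Sum>u\<in>S. \<Sum>n. (mpow S Q n x u / fact n * t ^ n) * Q u y)"
      by (rule suminf_sum) (intro summable_mult2 sm, auto)
    also have "\<dots> = (\<Sum>u\<in>S. trans_fun S Q t x u * Q u y)"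
    proof (intro sum.cong refl)
      fix u assume u: "u \<in> S"
      show "(\<Sum>n. (mpow S Q n x u / fact n * t ^ n) * Q u y) = trans_fun S Q t x u * Q u y"
        using suminf_mult2[OF sm[OF u, of t], where c="Q u y"] by (simp add: trans_fun_series)
    qed
    finally show ?thesis .
  qed
  ultimately show ?thesis by simp
qed

lemma trans_fun_zero: "trans_fun S Q 0 x u = (if x = u then 1 else 0)"
  unfolding trans_fun_series by (subst powser_zero) simp



lemma finite_states: "finite (states K N)"
proof -
  have "states K N \<subseteq> (\<lambda>f i. if i \<le> K then f i else 0) ` ({..K} \<rightarrow>\<^sub>E {..N})"
  proof
    fix s assume s: "s \<in> states K N"
    have le: "s i \<le> N" if "i \<le> K" for i
    proof -
      have "s i \<le> (\<Sum>j\<le>K. s j)" by (rule member_le_sum) (use that in auto)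
      then show ?thesis using s unfolding states_def by simp
    qed
    have "s = (\<lambda>i. if i \<le> K then restrict s {..K} i else 0)"
      using s unfolding states_def by (auto simp: fun_eq_iff)
    moreover have "restrict s {..K} \<in> {..K} \<rightarrow>\<^sub>E {..N}" using le by auto
    ultimately show "s \<in> (\<lambda>f i. if i \<le> K then f i else 0) ` ({..K} \<rightarrow>\<^sub>E {..N})" by blast
  qed
  then show ?thesis by (rule finite_subset) (auto intro!: finite_PiE)
qed

lemma mv_neq: "k \<noteq> k' \<Longrightarrow> mv s k' k \<noteq> s"
proof
  assume "k \<noteq> k'" "mv s k' k = s"
  then have "mv s k' k k = s k" by simp
  then show False unfolding mv_def by simp
qed

lemma mv_in_states:
  assumes s: "s \<in> states K N" and k: "k \<le> K" and k': "k' \<le> K" and kk: "k \<noteq> k'" and pos: "1 \<le> s k'"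
  shows "mv s k' k \<in> states K N"
proof -
  have i: "int (mv s k' k i) = int (s i) + (if i = k then 1 else 0) - (if i = k' then 1 else 0)" for i
    using pos kk unfolding mv_def by auto
  have "int (\<Sum>i\<le>K. mv s k' k i) = (\<Sum>i\<le>K. int (s i) + (if i = k then 1 else 0) - (if i = k' then 1 else 0))"
    by (simp add: i)
  also have "\<dots> = (\<Sum>i\<le>K. int (s i))"
    using k k' by (simp add: sum.distrib sum_subtractf)
  also have "\<dots> = int N" using s unfolding states_def by (simp add: of_nat_sum[symmetric])
  finally have "(\<Sum>i\<le>K. mv s k' k i) = N" by linarith
  moreover have "\<forall>i>K. mv s k' k i = 0" using s k k' unfolding states_def mv_def by auto
  ultimately show ?thesis unfolding states_def by simp
qed

lemma sum_if_coef:
  fixes c :: real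
  assumes "finite T" "c \<noteq> 0 \<Longrightarrow> m \<in> T"
  shows "(\<Sum>u\<in>T. (if u = m then c else 0) * h u) = c * h m"
proof -
  have "(\<Sum>u\<in>T. (if u = m then c else 0) * h u) = (\<Sum>u\<in>T. if u = m then c * h m else 0)"
    by (intro sum.cong) auto
  also have "\<dots> = (if m \<in> T then c * h m else 0)" using assms(1) by (simp add: sum.delta)
  also have "\<dots> = c * h m" using assms(2) by auto
  finally show ?thesis .
qed

definition Acoef :: "nat \<Rightarrow> nat \<Rightarrow> real \<Rightarrow> real \<Rightarrow> (nat \<Rightarrow> real) \<Rightarrow> (nat \<Rightarrow> nat) \<Rightarrow> nat \<Rightarrow> real" where
  "Acoef K N lam mu p s k = real (s 0) * lam * (mu / real K + (1 - mu) * (real (s k) / real N)) * p k"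

definition Bcoef :: "nat \<Rightarrow> real \<Rightarrow> (nat \<Rightarrow> real) \<Rightarrow> (nat \<Rightarrow> nat) \<Rightarrow> nat \<Rightarrow> nat \<Rightarrow> real" where
  "Bcoef N lam p s k k' = real (s k') * lam * (real (s k) / real N) * p k"

definition drift :: "nat \<Rightarrow> nat \<Rightarrow> real \<Rightarrow> real \<Rightarrow> (nat \<Rightarrow> real) \<Rightarrow> ((nat \<Rightarrow> nat) \<Rightarrow> real) \<Rightarrow> (nat \<Rightarrow> nat) \<Rightarrow> real" where
  "drift K N lam mu p g s =
     (\<Sum>k\<in>{1..K}. Acoef K N lam mu p s k * (g (mv s 0 k) - g s))
   + (\<Sum>k\<in>{1..K}. \<Sum>k'\<in>{1..K} - {k}. Bcoef N lam p s k k' * (g (mv s k' k) - g s))"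

lemma gen_drift:
  assumes s: "s \<in> states K N"
  shows "(\<Sum>u\<in>states K N. gen K N lam mu p s u * g u) = drift K N lam mu p g s"
proof -
  let ?S = "states K N" and ?T = "states K N - {s}"
  let ?r = "rate K N lam mu p s"
  define h where "h u = g u - g s" for u
  have fin: "finite ?S" "finite ?T" by (auto simp: finite_states)
  have "(\<Sum>u\<in>?S. gen K N lam mu p s u * g u) = gen K N lam mu p s s * g s + (\<Sum>u\<in>?T. gen K N lam mu p s u * g u)"
    using s fin by (simp add: sum.remove)
  also have "\<dots> = gen K N lam mu p s s * g s + (\<Sum>u\<in>?T. ?r u * g u)"
    by (intro arg_cong2[where f="(+)"] refl sum.cong) (auto simp: gen_def)
  also have "\<dots> = (\<Sum>u\<in>?T. ?r u * h u)"
    by (simp add: gen_def h_def sum_distrib_left algebra_simps sum_subtractf)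
  also have "\<dots> = drift K N lam mu p g s"
  proof -
    have r: "?r u = (\<Sum>k\<in>{1..K}. if u = mv s 0 k then Acoef K N lam mu p s k else 0)
        + (\<Sum>k\<in>{1..K}. \<Sum>k'\<in>{1..K} - {k}. if u = mv s k' k then Bcoef N lam p s k k' else 0)" for u
      unfolding rate_def Acoef_def Bcoef_def by simp
    have "(\<Sum>u\<in>?T. ?r u * h u) =
        (\<Sum>k\<in>{1..K}. \<Sum>u\<in>?T. (if u = mv s 0 k then Acoef K N lam mu p s k else 0) * h u)
      + (\<Sum>k\<in>{1..K}. \<Sum>k'\<in>{1..K} - {k}. \<Sum>u\<in>?T. (if u = mv s k' k then Bcoef N lam p s k k' else 0) * h u)"
      unfolding r distrib_right sum.distrib sum_distrib_right
      apply (subst sum.swap) apply (rule arg_cong2[where f="(+)"], rule refl)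
      apply (subst sum.swap) apply (rule sum.cong, rule refl)
      apply (subst sum.swap) apply (rule refl)
      done
    also have "\<dots> = (\<Sum>k\<in>{1..K}. Acoef K N lam mu p s k * h (mv s 0 k))
      + (\<Sum>k\<in>{1..K}. \<Sum>k'\<in>{1..K} - {k}. Bcoef N lam p s k k' * h (mv s k' k))"
    proof (intro arg_cong2[where f="(+)"] sum.cong refl sum_if_coef fin)
      fix k assume k: "k \<in> {1..K}"
      assume "Acoef K N lam mu p s k \<noteq> 0"
      then have "1 \<le> s 0" unfolding Acoef_def by (cases "s 0") auto
      then show "mv s 0 k \<in> ?T" using k s mv_in_states[of s K N k 0] mv_neq[of k 0 s] by auto
    next
      fix k k' assume k: "k \<in> {1..K}" and k': "k' \<in> {1..K} - {k}"
      assume "Bcoef N lam p s k k' \<noteq> 0"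
      then have "1 \<le> s k'" unfolding Bcoef_def by (cases "s k'") auto
      then show "mv s k' k \<in> ?T" using k k' s mv_in_states[of s K N k k'] mv_neq[of k k' s] by auto
    qed
    finally show ?thesis unfolding drift_def h_def .
  qed
  finally show ?thesis .
qed



lemma sum_split1: "1 \<le> (K::nat) \<Longrightarrow> (\<Sum>k\<in>{1..K}. f k) = f 1 + (\<Sum>k\<in>{2..K}. f k)"
proof -
  assume "1 \<le> K"
  then have "{1..K} = insert 1 {2..K}" by auto
  then show ?thesis by simp
qed

lemma sum_split2:
  fixes f :: "nat \<Rightarrow> nat \<Rightarrow> real"
  assumes K: "1 \<le> (K::nat)" and z: "\<And>k k'. k \<in> {2..K} \<Longrightarrow> k' \<in> {2..K} \<Longrightarrow> k \<noteq> k' \<Longrightarrow> f k k' = 0"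
  shows "(\<Sum>k\<in>{1..K}. \<Sum>k'\<in>{1..K} - {k}. f k k') = (\<Sum>k\<in>{2..K}. f 1 k + f k 1)"
proof -
  have "(\<Sum>k\<in>{1..K}. \<Sum>k'\<in>{1..K} - {k}. f k k') = (\<Sum>k'\<in>{1..K} - {1}. f 1 k') + (\<Sum>k\<in>{2..K}. \<Sum>k'\<in>{1..K} - {k}. f k k')"
    using K by (rule sum_split1)
  also have "{1..K} - {1} = {2..K}" by auto
  also have "(\<Sum>k\<in>{2..K}. \<Sum>k'\<in>{1..K} - {k}. f k k') = (\<Sum>k\<in>{2..K}. f k 1)"
  proof (intro sum.cong refl)
    fix k assume k: "k \<in> {2..K}"
    have "{1..K} - {k} = insert 1 ({2..K} - {k})" using k by auto
    then have "(\<Sum>k'\<in>{1..K} - {k}. f k k') = f k 1 + (\<Sum>k'\<in>{2..K} - {k}. f k k')" by simp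
    also have "(\<Sum>k'\<in>{2..K} - {k}. f k k') = 0" using k z by (intro sum.neutral) auto
    finally show "(\<Sum>k'\<in>{1..K} - {k}. f k k') = f k 1" by simp
  qed
  finally show ?thesis by (simp add: sum.distrib)
qed

lemma states_split:
  assumes s: "s \<in> states K N" and K: "1 \<le> K"
  shows "real (s 0) + real (s 1) + (\<Sum>k\<in>{2..K}. real (s k)) = real N"
proof -
  have "{..K} = insert 0 (insert 1 {2..K})" using K by auto
  then have "(\<Sum>i\<le>K. real (s i)) = real (s 0) + real (s 1) + (\<Sum>k\<in>{2..K}. real (s k))" by simp
  moreover have "(\<Sum>i\<le>K. real (s i)) = real N" using s unfolding states_def by (simp add: of_nat_sum[symmetric])
  ultimately show ?thesis by simp
qed

lemma states_target:
  assumes s: "s \<in> states K N" and K: "1 \<le> K" and s0: "s 0 = 0" and z: "\<And>k. k \<in> {2..K} \<Longrightarrow> s k = 0"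
  shows "s = target N"
proof -
  have "real (s 1) = real N" using states_split[OF s K] s0 z by simp
  then have "s 1 = N" by simp
  moreover have "s i = 0" if "i \<noteq> 1" for i
  proof (cases "i = 0")
    case False
    show ?thesis
    proof (cases "i \<le> K")
      case True then show ?thesis using False \<open>i \<noteq> 1\<close> z by auto
    next
      case False then show ?thesis using s unfolding states_def by auto
    qed
  qed (use s0 in auto)
  ultimately show ?thesis unfolding target_def by auto
qed

definition Gf :: "real \<Rightarrow> real \<Rightarrow> (nat \<Rightarrow> nat) \<Rightarrow> real" where
  "Gf \<rho> \<beta> s = \<rho> ^ (s 1) * \<beta> ^ (s 0)"

lemma G_A_term:
  assumes "0 < \<rho>" "0 < \<beta>" "k \<in> {1..K}"
  shows "Acoef K N lam mu p s k * (Gf \<rho> \<beta> (mv s 0 k) - Gf \<rho> \<beta> s)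
       = Acoef K N lam mu p s k * Gf \<rho> \<beta> s * (if k = 1 then \<rho> / \<beta> - 1 else 1 / \<beta> - 1)"
proof (cases "s 0")
  case 0 then show ?thesis by (simp add: Acoef_def)
next
  case (Suc n)
  have k0: "k \<noteq> 0" using assms(3) by auto
  show ?thesis
  proof (cases "k = 1")
    case True
    then show ?thesis using Suc assms k0 by (simp add: Gf_def mv_def field_simps)
  next
    case False
    then show ?thesis using Suc assms k0 by (simp add: Gf_def mv_def field_simps)
  qed
qed

lemma G_B_term:
  assumes "0 < \<rho>" "0 < \<beta>" "k \<in> {1..K}" "k' \<in> {1..K} - {k}"
  shows "Bcoef N lam p s k k' * (Gf \<rho> \<beta> (mv s k' k) - Gf \<rho> \<beta> s)
       = Bcoef N lam p s k k' * Gf \<rho> \<beta> s * (if k = 1 then \<rho> - 1 else if k' = 1 then 1 / \<rho> - 1 else 0)"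
proof -
  have k0: "k \<noteq> 0" "k' \<noteq> 0" "k \<noteq> k'" using assms by auto
  show ?thesis
  proof (cases "k = 1")
    case True
    then show ?thesis using assms k0 by (simp add: Gf_def mv_def field_simps)
  next
    case False
    show ?thesis
    proof (cases "k' = 1")
      case True
      show ?thesis
      proof (cases "s 1")
        case 0 then show ?thesis using True by (simp add: Bcoef_def)
      next
        case (Suc n) then show ?thesis using True False assms k0 by (simp add: Gf_def mv_def field_simps)
      qed
    next
      case False2: False
      then show ?thesis using False assms k0 by (simp add: Gf_def mv_def)
    qed
  qed
qed

lemma V_A_term:
  assumes "k \<in> {1..K}"
  shows "Acoef K N lam mu p s k * (real ((mv s 0 k) 1) - real (s 1))
       = Acoef K N lam mu p s k * (if k = 1 then 1 else 0)"
  using assms by (cases "s 0") (auto simp: Acoef_def mv_def)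

lemma V_B_term:
  assumes "k \<in> {1..K}" "k' \<in> {1..K} - {k}"
  shows "Bcoef N lam p s k k' * (real ((mv s k' k) 1) - real (s 1))
       = Bcoef N lam p s k k' * (if k = 1 then 1 else if k' = 1 then -1 else 0)"
  using assms by (cases "s 1") (auto simp: Bcoef_def mv_def)



lemma G_drift:
  assumes K2: "2 \<le> K" and N1: "1 \<le> N" and lam: "0 < lam" and mu: "0 < mu" "mu \<le> 1"
    and p1: "0 < p 1" and p2: "0 < p 2" "p 2 < p 1"
    and pk: "\<And>k. k \<in> {2..K} \<Longrightarrow> 0 \<le> p k \<and> p k \<le> p 2"
    and s: "s \<in> states K N"
    and rho: "\<rho> = p 2 / p 1" and m: "m = mu / real K" and beta: "\<beta> = \<rho> / (\<rho> + m * (1 - \<rho>))"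
  shows "drift K N lam mu p (Gf \<rho> \<beta>) s \<le> 0"
proof -
  let ?G = "Gf \<rho> \<beta>"
  let ?A = "Acoef K N lam mu p s" and ?B = "Bcoef N lam p s"
  have K1: "1 \<le> K" using K2 by simp
  have r0: "0 < \<rho>" "\<rho> < 1" using rho p1 p2 by auto
  have Kr: "2 \<le> real K" using K2 by simp
  have m0: "0 < m" "m \<le> 1/2"
  proof -
    show "0 < m" using m mu Kr by simp
    have "m \<le> 1 / real K" unfolding m using mu Kr by (intro divide_right_mono) auto
    moreover have "1 / real K \<le> 1/2" using Kr by (intro divide_left_mono) auto
    ultimately show "m \<le> 1/2" by linarith
  qed
  have den: "0 < \<rho> + m * (1 - \<rho>)" using r0 m0 by (simp add: add_pos_nonneg)
  have b0: "0 < \<beta>" unfolding beta using r0 den by simp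
  have rb: "\<rho> / \<beta> = \<rho> + m * (1 - \<rho>)" unfolding beta using r0 den by simp
  have ib: "1 / \<beta> - 1 = m * (1 - \<rho>) / \<rho>" unfolding beta using r0 den by (simp add: field_simps)
  have p2r: "p 2 / \<rho> = p 1" using rho p1 p2 by simp
  have G0: "0 \<le> ?G s" using r0 b0 by (simp add: Gf_def)
  have eq1: "(\<Sum>k\<in>{1..K}. ?A k * (?G (mv s 0 k) - ?G s))
      = ?G s * (?A 1 * (\<rho> / \<beta> - 1) + (\<Sum>k\<in>{2..K}. ?A k * (1 / \<beta> - 1)))"
  proof -
    have "(\<Sum>k\<in>{1..K}. ?A k * (?G (mv s 0 k) - ?G s))
      = (\<Sum>k\<in>{1..K}. ?A k * ?G s * (if k = 1 then \<rho> / \<beta> - 1 else 1 / \<beta> - 1))"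
      by (intro sum.cong refl G_A_term r0 b0)
    also have "\<dots> = ?A 1 * ?G s * (\<rho> / \<beta> - 1) + (\<Sum>k\<in>{2..K}. ?A k * ?G s * (1 / \<beta> - 1))"
      by (subst sum_split1[OF K1]) (simp)
    finally show ?thesis by (simp add: sum_distrib_left algebra_simps)
  qed
  have eq2: "(\<Sum>k\<in>{1..K}. \<Sum>k'\<in>{1..K} - {k}. ?B k k' * (?G (mv s k' k) - ?G s))
      = ?G s * (\<Sum>k\<in>{2..K}. ?B 1 k * (\<rho> - 1) + ?B k 1 * (1 / \<rho> - 1))"
  proof -
    have "(\<Sum>k\<in>{1..K}. \<Sum>k'\<in>{1..K} - {k}. ?B k k' * (?G (mv s k' k) - ?G s))
      = (\<Sum>k\<in>{1..K}. \<Sum>k'\<in>{1..K} - {k}. ?B k k' * ?G s * (if k = 1 then \<rho> - 1 else if k' = 1 then 1 / \<rho> - 1 else 0))"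
      by (intro sum.cong refl G_B_term r0 b0) auto
    also have "\<dots> = (\<Sum>k\<in>{2..K}. ?B 1 k * ?G s * (\<rho> - 1) + ?B k 1 * ?G s * (1 / \<rho> - 1))"
      by (subst sum_split2[OF K1]) auto
    finally show ?thesis by (simp add: sum_distrib_left algebra_simps)
  qed
  define c0 where "c0 = real (s 0) * lam"
  have c0: "0 \<le> c0" using lam by (simp add: c0_def)
  have Ak: "?A k = c0 * (m + (1 - mu) * (real (s k) / real N)) * p k" for k
    by (simp add: Acoef_def c0_def m)
  have sk: "(\<Sum>k\<in>{2..K}. real (s k)) \<le> real N"
    using states_split[OF s K1] by simp
  have Aineq: "?A 1 * (\<rho> / \<beta> - 1) + (\<Sum>k\<in>{2..K}. ?A k * (1 / \<beta> - 1)) \<le> 0"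
  proof -
    have coef: "\<rho> / \<beta> - 1 = - ((1 - \<rho>) * (1 - m))" using rb by (simp add: algebra_simps)
    have coefle: "\<rho> / \<beta> - 1 \<le> 0" using coef r0 m0 by (simp add: mult_nonneg_nonneg)
    have "c0 * m * p 1 \<le> ?A 1"
      unfolding Ak using c0 p1 mu N1 by (intro mult_right_mono mult_left_mono) (auto simp: add_increasing2)
    then have I1: "?A 1 * (\<rho> / \<beta> - 1) \<le> c0 * m * p 1 * (\<rho> / \<beta> - 1)"
      using coefle by (rule mult_right_mono_neg)
    have "(\<Sum>k\<in>{2..K}. ?A k) \<le> (\<Sum>k\<in>{2..K}. c0 * (m + (1 - mu) * (real (s k) / real N)) * p 2)"
      unfolding Ak using c0 pk m0 mu by (intro sum_mono mult_left_mono) (auto intro!: mult_nonneg_nonneg add_nonneg_nonneg)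
    also have "\<dots> = c0 * p 2 * ((real K - 1) * m + (1 - mu) / real N * (\<Sum>k\<in>{2..K}. real (s k)))"
      using K2 by (simp add: sum.distrib sum_distrib_left sum_divide_distrib[symmetric] algebra_simps of_nat_diff)
    also have "\<dots> \<le> c0 * p 2 * ((real K - 1) * m + (1 - mu) / real N * real N)"
      using c0 p2 mu N1 sk by (intro mult_left_mono add_left_mono) (auto)
    also have "\<dots> = c0 * p 2 * (1 - m)"
      using N1 K2 m by (simp add: field_simps)
    finally have S2: "(\<Sum>k\<in>{2..K}. ?A k) \<le> c0 * p 2 * (1 - m)" .
    have "(\<Sum>k\<in>{2..K}. ?A k * (1 / \<beta> - 1)) = (\<Sum>k\<in>{2..K}. ?A k) * (m * (1 - \<rho>) / \<rho>)"
      by (simp add: sum_distrib_right sum_divide_distrib ib)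
    also have "\<dots> \<le> c0 * p 2 * (1 - m) * (m * (1 - \<rho>) / \<rho>)"
      using S2 r0 m0 by (intro mult_right_mono) auto
    also have "\<dots> = c0 * m * (p 2 / \<rho>) * (1 - m) * (1 - \<rho>)" by (simp add: field_simps)
    also have "\<dots> = c0 * m * p 1 * (1 - m) * (1 - \<rho>)" using p2r by simp
    finally have I2: "(\<Sum>k\<in>{2..K}. ?A k * (1 / \<beta> - 1)) \<le> c0 * m * p 1 * (1 - m) * (1 - \<rho>)" .
    have "c0 * m * p 1 * (\<rho> / \<beta> - 1) = - (c0 * m * p 1 * (1 - m) * (1 - \<rho>))"
      unfolding coef by (simp add: algebra_simps)
    then show ?thesis using I1 I2 by linarith
  qed
  have Bineq: "(\<Sum>k\<in>{2..K}. ?B 1 k * (\<rho> - 1) + ?B k 1 * (1 / \<rho> - 1)) \<le> 0"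
  proof (rule sum_nonpos)
    fix k assume k: "k \<in> {2..K}"
    define w where "w = real (s k) * lam * real (s 1) / real N"
    have w: "0 \<le> w" using lam by (simp add: w_def)
    have "?B 1 k * (\<rho> - 1) + ?B k 1 * (1 / \<rho> - 1) = w * (p 1 * (\<rho> - 1) + p k * (1 / \<rho> - 1))"
      using r0 N1 by (simp add: Bcoef_def w_def field_simps)
    also have "\<dots> \<le> w * (p 1 * (\<rho> - 1) + p 2 * (1 / \<rho> - 1))"
      using pk[OF k] r0 w by (intro mult_left_mono add_left_mono mult_right_mono) (auto simp: field_simps)
    also have "p 2 * (1 / \<rho> - 1) = p 1 * (1 - \<rho>)"
      using p2r r0 by (simp add: field_simps)
    finally show "?B 1 k * (\<rho> - 1) + ?B k 1 * (1 / \<rho> - 1) \<le> 0" by (simp add: algebra_simps)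
  qed
  have "drift K N lam mu p ?G s = ?G s * (?A 1 * (\<rho> / \<beta> - 1) + (\<Sum>k\<in>{2..K}. ?A k * (1 / \<beta> - 1)))
      + ?G s * (\<Sum>k\<in>{2..K}. ?B 1 k * (\<rho> - 1) + ?B k 1 * (1 / \<rho> - 1))"
    unfolding drift_def eq1 eq2 ..
  also have "\<dots> \<le> 0"
    using mult_nonneg_nonpos[OF G0 Aineq] mult_nonneg_nonpos[OF G0 Bineq] by linarith
  finally show ?thesis .
qed



lemma V_drift:
  assumes K2: "2 \<le> K" and N1: "1 \<le> N" and lam: "0 < lam" and mu: "0 < mu" "mu \<le> 1"
    and p1: "0 < p 1" and p2: "0 < p 2" "p 2 < p 1"
    and pk: "\<And>k. k \<in> {2..K} \<Longrightarrow> 0 \<le> p k \<and> p k \<le> p 2"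
    and s: "s \<in> states K N"
  shows "real (s 0) * lam * (mu / real K) * p 1 + lam * (p 1 - p 2) / real N * (real (s 1) * (\<Sum>k\<in>{2..K}. real (s k)))
      \<le> drift K N lam mu p (\<lambda>s. real (s 1)) s"
proof -
  let ?V = "\<lambda>s. real (s 1)"
  let ?A = "Acoef K N lam mu p s" and ?B = "Bcoef N lam p s"
  have K1: "1 \<le> K" using K2 by simp
  have eq1: "(\<Sum>k\<in>{1..K}. ?A k * (?V (mv s 0 k) - ?V s)) = ?A 1"
  proof -
    have "(\<Sum>k\<in>{1..K}. ?A k * (?V (mv s 0 k) - ?V s)) = (\<Sum>k\<in>{1..K}. ?A k * (if k = 1 then 1 else 0))"
      by (intro sum.cong refl V_A_term)
    also have "\<dots> = ?A 1" by (subst sum_split1[OF K1]) simp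
    finally show ?thesis .
  qed
  have eq2: "(\<Sum>k\<in>{1..K}. \<Sum>k'\<in>{1..K} - {k}. ?B k k' * (?V (mv s k' k) - ?V s))
      = (\<Sum>k\<in>{2..K}. ?B 1 k - ?B k 1)"
  proof -
    have "(\<Sum>k\<in>{1..K}. \<Sum>k'\<in>{1..K} - {k}. ?B k k' * (?V (mv s k' k) - ?V s))
      = (\<Sum>k\<in>{1..K}. \<Sum>k'\<in>{1..K} - {k}. ?B k k' * (if k = 1 then 1 else if k' = 1 then -1 else 0))"
      by (intro sum.cong refl V_B_term) auto
    also have "\<dots> = (\<Sum>k\<in>{2..K}. ?B 1 k - ?B k 1)"
      by (subst sum_split2[OF K1]) auto
    finally show ?thesis .
  qed
  have A1: "real (s 0) * lam * (mu / real K) * p 1 \<le> ?A 1"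
    unfolding Acoef_def using lam p1 mu N1
    by (intro mult_right_mono mult_left_mono) (auto simp: add_increasing2)
  have B: "(\<Sum>k\<in>{2..K}. lam * (p 1 - p 2) / real N * (real (s 1) * real (s k))) \<le> (\<Sum>k\<in>{2..K}. ?B 1 k - ?B k 1)"
  proof (rule sum_mono)
    fix k assume k: "k \<in> {2..K}"
    define w where "w = real (s k) * lam * real (s 1) / real N"
    have w: "0 \<le> w" using lam by (simp add: w_def)
    have "lam * (p 1 - p 2) / real N * (real (s 1) * real (s k)) = w * (p 1 - p 2)"
      by (simp add: w_def)
    also have "\<dots> \<le> w * (p 1 - p k)" using pk[OF k] w by (intro mult_left_mono) auto
    also have "\<dots> = ?B 1 k - ?B k 1" using N1 by (simp add: Bcoef_def w_def field_simps)
    finally show "lam * (p 1 - p 2) / real N * (real (s 1) * real (s k)) \<le> ?B 1 k - ?B k 1" .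
  qed
  have "lam * (p 1 - p 2) / real N * (real (s 1) * (\<Sum>k\<in>{2..K}. real (s k)))
      = (\<Sum>k\<in>{2..K}. lam * (p 1 - p 2) / real N * (real (s 1) * real (s k)))"
    by (simp add: sum_distrib_left)
  then show ?thesis unfolding drift_def eq1 eq2 using A1 B by linarith
qed

lemma V_drift_pos:
  assumes K2: "2 \<le> K" and N1: "1 \<le> N" and lam: "0 < lam" and mu: "0 < mu" "mu \<le> 1"
    and p1: "0 < p 1" and p2: "0 < p 2" "p 2 < p 1"
    and pk: "\<And>k. k \<in> {2..K} \<Longrightarrow> 0 \<le> p k \<and> p k \<le> p 2"
    and s: "s \<in> states K N"
  shows "0 \<le> drift K N lam mu p (\<lambda>s. real (s 1)) s"
    and "s \<noteq> target N \<Longrightarrow> 1 \<le> s 0 \<or> 1 \<le> s 1 \<Longrightarrow>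
          lam * min (mu / real K * p 1) ((p 1 - p 2) / real N) \<le> drift K N lam mu p (\<lambda>s. real (s 1)) s"
proof -
  note D = V_drift[OF assms]
  let ?S2 = "(\<Sum>k\<in>{2..K}. real (s k))"
  have t1: "0 \<le> real (s 0) * lam * (mu / real K) * p 1" using lam mu p1 by simp
  have t2: "0 \<le> lam * (p 1 - p 2) / real N * (real (s 1) * ?S2)"
    using lam p2 by (intro mult_nonneg_nonneg sum_nonneg) auto
  show "0 \<le> drift K N lam mu p (\<lambda>s. real (s 1)) s" using D t1 t2 by linarith
  assume nt: "s \<noteq> target N" and W: "1 \<le> s 0 \<or> 1 \<le> s 1"
  show "lam * min (mu / real K * p 1) ((p 1 - p 2) / real N) \<le> drift K N lam mu p (\<lambda>s. real (s 1)) s"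
  proof (cases "1 \<le> s 0")
    case True
    have "lam * min (mu / real K * p 1) ((p 1 - p 2) / real N) \<le> lam * (mu / real K * p 1)"
      using lam by (intro mult_left_mono) auto
    also have "\<dots> \<le> real (s 0) * lam * (mu / real K) * p 1"
    proof -
      have "1 * (lam * (mu / real K * p 1)) \<le> real (s 0) * (lam * (mu / real K * p 1))"
        using True lam mu p1 by (intro mult_right_mono) auto
      then show ?thesis by (simp add: mult_ac)
    qed
    finally show ?thesis using D t2 by linarith
  next
    case False
    then have s0: "s 0 = 0" by simp
    with W have s1: "1 \<le> s 1" by simp
    have "\<exists>k\<in>{2..K}. s k \<noteq> 0"
    proof (rule ccontr)
      assume "\<not> ?thesis"
      then have "s = target N" using states_target[OF s _ s0] K2 by auto
      with nt show False by simp
    qed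
    then obtain k where k: "k \<in> {2..K}" "1 \<le> s k" by auto
    have S2: "1 \<le> ?S2"
    proof -
      have "real (s k) \<le> ?S2" by (rule member_le_sum) (use k in auto)
      then show ?thesis using k by linarith
    qed
    have "1 \<le> real (s 1) * ?S2" using s1 S2 by (metis mult_mono' mult_1 of_nat_1 of_nat_mono zero_le_one)
    have "lam * min (mu / real K * p 1) ((p 1 - p 2) / real N) \<le> lam * ((p 1 - p 2) / real N)"
      using lam by (intro mult_left_mono) auto
    also have "\<dots> = lam * (p 1 - p 2) / real N * 1" by simp
    also have "\<dots> \<le> lam * (p 1 - p 2) / real N * (real (s 1) * ?S2)"
      using \<open>1 \<le> real (s 1) * ?S2\<close> lam p2 by (intro mult_left_mono) auto
    finally show ?thesis using D t1 by linarith
  qed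
qed



lemma mvt_real:
  fixes f :: "real \<Rightarrow> real"
  assumes "a < b" and d: "\<And>t. (f has_real_derivative f' t) (at t)"
  shows "\<exists>z. a < z \<and> z < b \<and> f b - f a = (b - a) * f' z"
proof -
  have "continuous_on {a..b} f"
    using d by (intro continuous_at_imp_continuous_on) (auto intro: DERIV_isCont)
  moreover have "f differentiable (at x)" for x using d real_differentiable_def by blast
  ultimately obtain l z where "a < z" "z < b" "DERIV f z :> l" "f b - f a = (b - a) * l"
    using MVT[OF assms(1)] by blast
  moreover have "l = f' z" using DERIV_unique[OF \<open>DERIV f z :> l\<close> d] .
  ultimately show ?thesis by blast
qed

lemma weighted_deriv:
  assumes fin: "finite S"
  shows "((\<lambda>t. \<Sum>u\<in>S. trans_fun S Q t x u * g u) has_real_derivative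
          (\<Sum>v\<in>S. trans_fun S Q t x v * (\<Sum>u\<in>S. Q v u * g u))) (at t)"
proof -
  have "((\<lambda>t. \<Sum>u\<in>S. trans_fun S Q t x u * g u) has_real_derivative
          (\<Sum>u\<in>S. (\<Sum>v\<in>S. trans_fun S Q t x v * Q v u) * g u)) (at t)"
    by (intro DERIV_sum DERIV_cmult_right trans_fun_deriv fin) 
  moreover have "(\<Sum>u\<in>S. (\<Sum>v\<in>S. trans_fun S Q t x v * Q v u) * g u)
      = (\<Sum>v\<in>S. trans_fun S Q t x v * (\<Sum>u\<in>S. Q v u * g u))"
    unfolding sum_distrib_right sum_distrib_left mult.assoc by (rule sum.swap)
  ultimately show ?thesis by simp
qed

lemma all_le_2: "(\<forall>i\<le>(2::nat). P i) \<longleftrightarrow> P 0 \<and> P 1 \<and> P 2"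
  by (auto simp: le_Suc_eq numeral_2_eq_2)

lemma all_le_1: "(\<forall>i\<le>Suc 0. P i) \<longleftrightarrow> P 0 \<and> P (Suc 0)"
  by (auto simp: le_Suc_eq)

locale ctmc_ctx =
  fixes M :: "'a measure" and S :: "'s set" and Q x0 and X :: "real \<Rightarrow> 'a \<Rightarrow> 's"
  assumes C: "is_ctmc M S Q x0 X" and fin: "finite S" and x0: "x0 \<in> S"
begin

lemma ps: "prob_space M" using C unfolding is_ctmc_def by blast

sublocale prob_space M by (rule ps)

lemma meas: "t \<ge> 0 \<Longrightarrow> {\<omega>\<in>space M. X t \<omega> = s} \<in> sets M" using C unfolding is_ctmc_def by blast
lemma inS: "\<omega> \<in> space M \<Longrightarrow> t \<ge> 0 \<Longrightarrow> X t \<omega> \<in> S" using C unfolding is_ctmc_def by blast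
lemma rc: "\<omega> \<in> space M \<Longrightarrow> t \<ge> 0 \<Longrightarrow> \<exists>\<epsilon>>0. \<forall>u. t \<le> u \<and> u < t + \<epsilon> \<longrightarrow> X u \<omega> = X t \<omega>"
  using C unfolding is_ctmc_def by blast
lemma fdd: "ts 0 = 0 \<Longrightarrow> (\<forall>i<n. ts i \<le> ts (Suc i)) \<Longrightarrow> (\<forall>i\<le>n. ss i \<in> S) \<Longrightarrow>
        measure M {\<omega>\<in>space M. \<forall>i\<le>n. X (ts i) \<omega> = ss i}
          = (if ss 0 = x0 then 1 else 0) *
            (\<Prod>i<n. trans_fun S Q (ts (Suc i) - ts i) (ss i) (ss (Suc i)))"
  using C unfolding is_ctmc_def by blast

lemma meas2: "t \<ge> 0 \<Longrightarrow> t' \<ge> 0 \<Longrightarrow> {\<omega>\<in>space M. X t \<omega> = s \<and> X t' \<omega> = s'} \<in> sets M"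
proof -
  assume "t \<ge> 0" "t' \<ge> 0"
  then have "{\<omega>\<in>space M. X t \<omega> = s} \<inter> {\<omega>\<in>space M. X t' \<omega> = s'} \<in> sets M" using meas by blast
  moreover have "{\<omega>\<in>space M. X t \<omega> = s \<and> X t' \<omega> = s'} = {\<omega>\<in>space M. X t \<omega> = s} \<inter> {\<omega>\<in>space M. X t' \<omega> = s'}" by auto
  ultimately show ?thesis by simp
qed

lemma X0: "measure M {\<omega>\<in>space M. X 0 \<omega> = x0} = 1"
  using fdd[of "\<lambda>_. 0" 0 "\<lambda>_. x0"] x0 by simp

lemma pt_eq: "t \<ge> 0 \<Longrightarrow> u \<in> S \<Longrightarrow> measure M {\<omega>\<in>space M. X 0 \<omega> = x0 \<and> X t \<omega> = u} = trans_fun S Q t x0 u"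
proof -
  assume t: "t \<ge> 0" and u: "u \<in> S"
  have "measure M {\<omega>\<in>space M. \<forall>i\<le>(1::nat). X (if i = 0 then 0 else t) \<omega> = (if i = 0 then x0 else u)} = trans_fun S Q t x0 u"
    using fdd[of "\<lambda>i::nat. if i = 0 then 0 else t" 1 "\<lambda>i. if i = 0 then x0 else u"] t u x0 by (simp add: le_Suc_eq all_le_1)
  then show ?thesis by (simp add: all_le_1)
qed

lemma pt_nonneg: "t \<ge> 0 \<Longrightarrow> u \<in> S \<Longrightarrow> 0 \<le> trans_fun S Q t x0 u"
  using pt_eq[symmetric] by simp

lemma pt_sum: "t \<ge> 0 \<Longrightarrow> (\<Sum>u\<in>S. trans_fun S Q t x0 u) = 1"
proof -
  assume t: "t \<ge> 0"
  have "(\<Sum>u\<in>S. trans_fun S Q t x0 u) = (\<Sum>u\<in>S. measure M {\<omega>\<in>space M. X 0 \<omega> = x0 \<and> X t \<omega> = u})"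
    using pt_eq t by simp
  also have "\<dots> = measure M (\<Union>u\<in>S. {\<omega>\<in>space M. X 0 \<omega> = x0 \<and> X t \<omega> = u})"
    by (rule finite_measure_finite_Union[symmetric]) (use fin t meas2 in \<open>auto simp: disjoint_family_on_def\<close>)
  also have "(\<Union>u\<in>S. {\<omega>\<in>space M. X 0 \<omega> = x0 \<and> X t \<omega> = u}) = {\<omega>\<in>space M. X 0 \<omega> = x0}"
    using inS t by auto
  finally show ?thesis using X0 by simp
qed

lemma absorb_lb:
  assumes z: "z \<in> S" and Qz: "\<And>u. Q z u = 0" and T: "0 \<le> T"
  shows "trans_fun S Q T x0 z \<le> measure M {\<omega>\<in>space M. \<forall>\<^sub>F t in at_top. X t \<omega> = z}"
proof -
  have mp: "mpow S Q (Suc n) z u = 0" for n u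
  proof (induction n arbitrary: u)
    case 0
    have "mpow S Q (Suc 0) z u = (\<Sum>w\<in>S. (if z = w then 1 else 0) * Q w u)" by simp
    also have "\<dots> = (\<Sum>w\<in>S. if w = z then Q z u else 0)" by (intro sum.cong) auto
    also have "\<dots> = 0" by (rule sum.neutral) (use Qz in auto)
    finally show ?case .
  next
    case (Suc n) then show ?case by simp
  qed
  have tz: "trans_fun S Q h z u = (if z = u then 1 else 0)" for h u
  proof -
    have "trans_fun S Q h z u = (\<Sum>n\<in>{0}. h ^ n / fact n * mpow S Q n z u)"
      unfolding trans_fun_def
    proof (rule suminf_finite)
      fix n :: nat assume "n \<notin> {0}"
      then obtain m where "n = Suc m" using not0_implies_Suc by auto
      then show "h ^ n / fact n * mpow S Q n z u = 0" by (simp del: mpow.simps add: mp)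
    qed simp
    then show ?thesis by simp
  qed
  define D where "D T' = {\<omega>\<in>space M. \<forall>q::rat. T' \<le> real_of_rat q \<longrightarrow> X (real_of_rat q) \<omega> = z}" for T'
  define Succ where "Succ = {\<omega>\<in>space M. \<forall>\<^sub>F t in at_top. X t \<omega> = z}"
  have Dmeas: "D T' \<in> sets M" if "0 \<le> T'" for T'
    unfolding D_def
  proof (rule sets.sets_Collect_countable_All)
    fix q :: rat
    show "{\<omega>\<in>space M. T' \<le> real_of_rat q \<longrightarrow> X (real_of_rat q) \<omega> = z} \<in> sets M"
    proof (cases "T' \<le> real_of_rat q")
      case True
      then have "0 \<le> real_of_rat q" using that by linarith
      then show ?thesis using meas[of "real_of_rat q" z] True by simp
    next
      case False then show ?thesis by simp
    qed
  qed
  have DS: "D T' \<subseteq> Succ" if T'0: "0 \<le> T'" for T'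
  proof
    fix \<omega> assume \<omega>: "\<omega> \<in> D T'"
    have sp: "\<omega> \<in> space M" and Dq: "\<And>q::rat. T' \<le> real_of_rat q \<Longrightarrow> X (real_of_rat q) \<omega> = z"
      using \<omega> unfolding D_def by auto
    have Xt: "X t \<omega> = z" if t: "T' \<le> t" for t
    proof -
      have t0: "0 \<le> t" using t T'0 by linarith
      obtain \<epsilon> where e0: "\<epsilon> > 0" and e: "\<And>u. t \<le> u \<Longrightarrow> u < t + \<epsilon> \<Longrightarrow> X u \<omega> = X t \<omega>"
        using rc[OF sp t0] by blast
      have "t < t + \<epsilon>" using e0 by simp
      then obtain r where r: "r \<in> \<rat>" "t < r" "r < t + \<epsilon>" using Rats_dense_in_real by blast
      from r(1) obtain q where q: "r = real_of_rat q" by (auto elim: Rats_cases)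
      have "X r \<omega> = X t \<omega>" using r(2,3) by (intro e) auto
      moreover have "X r \<omega> = z" unfolding q by (rule Dq) (use q r(2) t in linarith)
      ultimately show ?thesis by simp
    qed
    show "\<omega> \<in> Succ" unfolding Succ_def eventually_at_top_linorder using sp Xt by blast
  qed
  have SD: "Succ = (\<Union>n::nat. D (real n))"
  proof
    show "(\<Union>n::nat. D (real n)) \<subseteq> Succ" using DS[of "real _"] by auto
    show "Succ \<subseteq> (\<Union>n::nat. D (real n))"
    proof
      fix \<omega> assume "\<omega> \<in> Succ"
      then obtain T0 where "\<omega> \<in> space M" "\<forall>t\<ge>T0. X t \<omega> = z"
        unfolding Succ_def eventually_at_top_linorder by auto
      moreover obtain n :: nat where "T0 \<le> real n" using real_arch_simple by blast
      ultimately have "\<omega> \<in> D (real n)" unfolding D_def by auto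
      then show "\<omega> \<in> (\<Union>n::nat. D (real n))" by blast
    qed
  qed
  have Smeas: "Succ \<in> sets M" unfolding SD using Dmeas by auto
  define E where "E = {\<omega>\<in>space M. X 0 \<omega> = x0 \<and> X T \<omega> = z}"
  have Eeq: "measure M E = trans_fun S Q T x0 z" unfolding E_def using pt_eq T z by simp
  have AEq: "AE \<omega> in M. \<omega> \<in> E \<longrightarrow> X (real_of_rat q) \<omega> = z" if q: "T \<le> real_of_rat q" for q
  proof -
    let ?q = "real_of_rat q"
    define Nu where "Nu u = {\<omega>\<in>space M. \<forall>i\<le>(2::nat). X ((\<lambda>i. if i = 0 then 0 else if i = 1 then T else ?q) i) \<omega>
                          = (\<lambda>i. if i = 0 then x0 else if i = 1 then z else u) i}" for u
    have Nu_eq: "Nu u = {\<omega>\<in>space M. X 0 \<omega> = x0 \<and> X T \<omega> = z \<and> X ?q \<omega> = u}" for u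
      unfolding Nu_def all_le_2 by simp
    have "AE \<omega> in M. \<omega> \<notin> Nu u" if u: "u \<in> S - {z}" for u
    proof (rule AE_not_in)
      have m: "Nu u \<in> sets M"
      proof -
        have "Nu u = {\<omega>\<in>space M. X 0 \<omega> = x0 \<and> X T \<omega> = z} \<inter> {\<omega>\<in>space M. X ?q \<omega> = u}"
          unfolding Nu_eq by auto
        moreover have "0 \<le> ?q" using T q by linarith
        ultimately show ?thesis using meas2[of 0 T x0 z] meas[of ?q u] T by auto
      qed
      have "measure M (Nu u) = trans_fun S Q T x0 z * trans_fun S Q (?q - T) z u"
        unfolding Nu_def
        using fdd[of "\<lambda>i::nat. if i = 0 then 0 else if i = 1 then T else ?q" 2 "\<lambda>i::nat. if i = 0 then x0 else if i = 1 then z else u"]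
          T q x0 z u by (simp add: numeral_2_eq_2 less_Suc_eq le_Suc_eq all_le_1)
      also have "\<dots> = 0" using u by (auto simp: tz)
      finally have "measure M (Nu u) = 0" .
      then show "Nu u \<in> null_sets M" using m by (simp add: emeasure_eq_measure null_sets_def)
    qed
    then have "AE \<omega> in M. \<forall>u\<in>S - {z}. \<omega> \<notin> Nu u" using fin by (intro AE_finite_allI) auto
    then show ?thesis
    proof (rule eventually_mono)
      fix \<omega> assume h: "\<forall>u\<in>S - {z}. \<omega> \<notin> Nu u"
      show "\<omega> \<in> E \<longrightarrow> X ?q \<omega> = z"
      proof
        assume "\<omega> \<in> E"
        then have "\<omega> \<in> space M" "X 0 \<omega> = x0" "X T \<omega> = z" unfolding E_def by auto
        moreover have "X ?q \<omega> \<in> S" by (rule inS[OF \<open>\<omega> \<in> space M\<close>]) (use q T in linarith)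
        ultimately show "X ?q \<omega> = z" using h unfolding Nu_eq by auto
      qed
    qed
  qed
  have "AE \<omega> in M. \<omega> \<in> E \<longrightarrow> \<omega> \<in> D T"
  proof -
    have "AE \<omega> in M. \<forall>q\<in>UNIV. T \<le> real_of_rat q \<longrightarrow> (\<omega> \<in> E \<longrightarrow> X (real_of_rat q) \<omega> = z)"
      by (subst AE_ball_countable) (auto intro: AEq)
    then show ?thesis by (rule eventually_mono) (auto simp: D_def E_def)
  qed
  then have "measure M E \<le> measure M (D T)" using Dmeas[OF T] by (rule finite_measure_mono_AE)
  also have "\<dots> \<le> measure M Succ" using DS[OF T] Smeas by (rule finite_measure_mono)
  finally show ?thesis using Eeq Succ_def by simp
qed

end



lemma bound_A:
  fixes p :: "nat \<Rightarrow> real"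
  assumes K2: "2 \<le> K" and mu: "0 < mu" "mu \<le> 1" and d: "0 < \<delta>" "\<delta> \<le> 1"
    and p: "0 < p 2" "p 2 < p 1" "p 1 \<le> 1"
  shows "((p 2 / p 1) / ((p 2 / p 1) + mu / real K * (1 - p 2 / p 1))) ^ N
    \<le> (p 1 / p 2) powr (- (1 - \<delta>) * (mu * p 1 / (real K * exp 1)) * real N)"
proof -
  define r where "r = p 1 / p 2"
  define m where "m = mu / real K"
  define \<alpha> where "\<alpha> = (1 - \<delta>) * (mu * p 1 / (real K * exp 1))"
  have r1: "1 < r" using p by (simp add: r_def)
  have Kr: "2 \<le> real K" using K2 by simp
  have m0: "0 < m" "m \<le> 1"
  proof -
    show "0 < m" using m_def mu Kr by simp
    have "m \<le> 1 / real K" unfolding m_def using mu Kr by (intro divide_right_mono) auto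
    moreover have "1 / real K \<le> 1" using Kr by simp
    ultimately show "m \<le> 1" by linarith
  qed
  have a0: "0 \<le> \<alpha>" unfolding \<alpha>_def using d mu p Kr by (intro mult_nonneg_nonneg divide_nonneg_pos) auto
  have am: "\<alpha> \<le> m"
  proof -
    have "\<alpha> = ((1 - \<delta>) * p 1 / exp 1) * m" unfolding \<alpha>_def m_def by (simp add: field_simps)
    also have "\<dots> \<le> 1 * m"
    proof (intro mult_right_mono)
      have "(1 - \<delta>) * p 1 \<le> 1 * 1" using d p by (intro mult_mono) auto
      also have "\<dots> \<le> exp 1" by simp
      finally show "(1 - \<delta>) * p 1 / exp 1 \<le> 1" by simp
    qed (use m0 in auto)
    finally show ?thesis by simp
  qed
  have beta: "(p 2 / p 1) / ((p 2 / p 1) + m * (1 - p 2 / p 1)) = 1 / (1 + m * (r - 1))"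
    using p unfolding r_def by (simp add: field_simps)
  have Y: "r powr \<alpha> \<le> 1 + m * (r - 1)"
  proof -
    have "r powr \<alpha> * 1 powr (1 - \<alpha>) \<le> \<alpha> * r + (1 - \<alpha>) * 1"
      by (rule Youngs_inequality_0) (use a0 am m0 r1 in auto)
    then have "r powr \<alpha> \<le> 1 + \<alpha> * (r - 1)" by (simp add: algebra_simps)
    also have "\<dots> \<le> 1 + m * (r - 1)" using am r1 by (intro add_left_mono mult_right_mono) auto
    finally show ?thesis .
  qed
  have rp: "0 < r powr \<alpha>" using r1 by simp
  have "(p 1 / p 2) powr (- (1 - \<delta>) * (mu * p 1 / (real K * exp 1)) * real N) = r powr (- (\<alpha> * real N))"
  proof -
    have "- (1 - \<delta>) * (mu * p 1 / (real K * exp 1)) * real N = - (\<alpha> * real N)"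
      unfolding \<alpha>_def using Kr by (simp add: field_simps)
    then show ?thesis unfolding r_def by simp
  qed
  also have "\<dots> = 1 / (r powr \<alpha>) ^ N"
    using r1 by (simp add: powr_minus powr_powr[symmetric] powr_realpow rp divide_inverse)
  finally have A: "(p 1 / p 2) powr (- (1 - \<delta>) * (mu * p 1 / (real K * exp 1)) * real N) = 1 / (r powr \<alpha>) ^ N" .
  have "(1 / (1 + m * (r - 1))) ^ N = 1 / (1 + m * (r - 1)) ^ N" by (simp add: power_one_over)
  also have "\<dots> \<le> 1 / (r powr \<alpha>) ^ N"
  proof -
    have "0 \<le> m * (r - 1)" using r1 m0 by simp
    then show ?thesis
      using Y rp by (intro divide_left_mono power_mono mult_pos_pos zero_less_power) auto
  qed
  finally show ?thesis unfolding A beta[unfolded m_def] m_def .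
qed



lemma states_le_N: "u \<in> states K N \<Longrightarrow> i \<le> K \<Longrightarrow> u i \<le> N"
proof -
  assume u: "u \<in> states K N" and i: "i \<le> K"
  have "u i \<le> (\<Sum>j\<le>K. u j)" by (rule member_le_sum) (use i in auto)
  then show ?thesis using u unfolding states_def by simp
qed

theorem theorem1:
  fixes K N :: nat and lam mu \<delta> :: real and p :: "nat \<Rightarrow> real"
    and M :: "'a measure" and X :: "real \<Rightarrow> 'a \<Rightarrow> (nat \<Rightarrow> nat)"
  assumes "K \<ge> 2" and "N \<ge> 1" and "lam > 0"
    and "0 < mu" "mu \<le> 1" and "0 < \<delta>" "\<delta> \<le> 1"
    and "p 1 \<le> 1" "p 1 > p 2" "\<forall>k\<in>{2..<K}. p k \<ge> p (Suc k)" "p K \<ge> 0"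
    and "0 < p 1" and "p 2 \<noteq> 0"
    and "is_learning_chain K N lam mu p M X"
  shows "measure M {\<omega>\<in>space M. \<forall>\<^sub>F t in at_top. X t \<omega> = target N}
     \<ge> 1 - (p 1 / p 2) powr (- (1 - \<delta>) * (mu * p 1 / (real K * exp 1)) * real N)
         - exp (- (mu * p 1 / (real K * exp 1)) * (\<delta>\<^sup>2 / 2) * real N)"
proof -
  note K2 = assms(1) and N1 = assms(2) and lam = assms(3) and mu = assms(4,5) and d = assms(6,7)
    and p1le = assms(8) and p12 = assms(9) and chain = assms(10) and pK = assms(11) and p1 = assms(12)
    and p2ne = assms(13)
  have K1: "1 \<le> K" using K2 by simp
  define S where "S = states K N"
  define Q where "Q = gen K N lam mu p"
  define x0 :: "nat \<Rightarrow> nat" where "x0 = (\<lambda>i. if i = 0 then N else 0)"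
  have fin: "finite S" unfolding S_def by (rule finite_states)
  have x0S: "x0 \<in> S" unfolding S_def states_def x0_def by simp
  have C: "is_ctmc M S Q x0 X" using assms(14) unfolding is_learning_chain_def S_def Q_def x0_def .
  interpret ctmc_ctx M S Q x0 X by unfold_locales (rule C fin x0S)+
  have tS: "target N \<in> S" unfolding S_def states_def target_def using K1 by simp
  have rate0: "rate K N lam mu p (target N) u = 0" for u
  proof -
    have "rate K N lam mu p (target N) u = (\<Sum>k\<in>{1..K}. 0) + (\<Sum>k\<in>{1..K}. \<Sum>k'\<in>{1..K} - {k}. 0)"
      unfolding rate_def by (intro arg_cong2[where f="(+)"] sum.cong refl) (auto simp: target_def)
    then show ?thesis by simp
  qed
  have Qt: "Q (target N) u = 0" for u unfolding Q_def gen_def using rate0 by auto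
  have pk: "0 \<le> p k \<and> p k \<le> p 2" if k: "k \<in> {2..K}" for k
  proof
    have k2: "2 \<le> k" and kK: "k \<le> K" using k by auto
    have "p K \<le> p k" using kK
    proof (induction k rule: inc_induct)
      case base show ?case by simp
    next
      case (step n)
      have "p (Suc n) \<le> p n" using chain step.hyps k2 by auto
      then show ?case using step.IH by linarith
    qed
    then show "0 \<le> p k" using pK by linarith
    show "p k \<le> p 2" using k2
    proof (induction k rule: dec_induct)
      case base show ?case by simp
    next
      case (step n)
      have "p (Suc n) \<le> p n" using chain step.hyps kK by auto
      then show ?case using step.IH by simp
    qed
  qed
  have p2: "0 < p 2" using pk[of 2] K2 p2ne by auto
  define \<rho> where "\<rho> = p 2 / p 1"
  define m where "m = mu / real K"
  define \<beta> where "\<beta> = \<rho> / (\<rho> + m * (1 - \<rho>))"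
  define G where "G = Gf \<rho> \<beta>"
  have r0: "0 < \<rho>" "\<rho> < 1" using p1 p2 p12 by (auto simp: \<rho>_def)
  have m0: "0 < m" using mu K2 by (simp add: m_def)
  have b0: "0 < \<beta>" unfolding \<beta>_def using r0 m0 by (simp add: add_pos_nonneg)
  define \<epsilon> where "\<epsilon> = lam * min (mu / real K * p 1) ((p 1 - p 2) / real N)"
  define Bb where "Bb = exp (- (mu * p 1 / (real K * exp 1)) * (\<delta>\<^sup>2 / 2) * real N)"
  have e0: "0 < \<epsilon>" unfolding \<epsilon>_def using lam mu K2 p1 p12 N1 by simp
  have Bb0: "0 < Bb" unfolding Bb_def by simp
  define pt where "pt t u = trans_fun S Q t x0 u" for t u
  define W where "W = {u. u \<noteq> target N \<and> (1 \<le> u 0 \<or> 1 \<le> u 1)}"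
  define \<psi> where "\<psi> t = (\<Sum>u\<in>S. pt t u * real (u 1))" for t
  define \<phi> where "\<phi> t = (\<Sum>u\<in>S. pt t u * G u)" for t
  have gd: "(\<Sum>u\<in>S. Q v u * g u) = drift K N lam mu p g v" if "v \<in> S" for v g
    using gen_drift[of v K N lam mu p g] that unfolding S_def Q_def by simp
  have d\<psi>: "(\<psi> has_real_derivative (\<Sum>v\<in>S. pt t v * drift K N lam mu p (\<lambda>s. real (s 1)) v)) (at t)" for t
  proof -
    have "(\<Sum>v\<in>S. pt t v * (\<Sum>u\<in>S. Q v u * real (u 1))) = (\<Sum>v\<in>S. pt t v * drift K N lam mu p (\<lambda>s. real (s 1)) v)"
      by (intro sum.cong refl) (simp add: gd)
    then show ?thesis using weighted_deriv[OF fin, of Q x0 "\<lambda>s. real (s 1)" t]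
      unfolding \<psi>_def pt_def by (simp add: fun_eq_iff)
  qed
  have d\<phi>: "(\<phi> has_real_derivative (\<Sum>v\<in>S. pt t v * drift K N lam mu p G v)) (at t)" for t
  proof -
    have "(\<Sum>v\<in>S. pt t v * (\<Sum>u\<in>S. Q v u * G u)) = (\<Sum>v\<in>S. pt t v * drift K N lam mu p G v)"
      by (intro sum.cong refl) (simp add: gd)
    then show ?thesis using weighted_deriv[OF fin, of Q x0 G t]
      unfolding \<phi>_def pt_def by (simp add: fun_eq_iff)
  qed
  have pt0: "0 \<le> pt t u" if "0 \<le> t" "u \<in> S" for t u unfolding pt_def using pt_nonneg that .
  have pts: "(\<Sum>u\<in>S. pt t u) = 1" if "0 \<le> t" for t unfolding pt_def using pt_sum that .
  define T where "T = real N / (\<epsilon> * Bb) + 1"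
  have T0: "0 < T" unfolding T_def using e0 Bb0 by (simp add: add_nonneg_pos)
  obtain \<xi> where xi: "0 < \<xi>" "\<xi> < T" and mv1: "\<psi> T - \<psi> 0 = (T - 0) * (\<Sum>v\<in>S. pt \<xi> v * drift K N lam mu p (\<lambda>s. real (s 1)) v)"
    using mvt_real[OF T0 d\<psi>] by blast
  have \<psi>T: "\<psi> T \<le> real N"
  proof -
    have "\<psi> T \<le> (\<Sum>u\<in>S. pt T u * real N)"
      unfolding \<psi>_def using T0 pt0 states_le_N[of _ K N 1] K1
      by (intro sum_mono mult_left_mono) (auto simp: S_def)
    also have "\<dots> = real N" using pts[of T] T0 by (simp add: sum_distrib_right[symmetric])
    finally show ?thesis .
  qed
  have \<psi>0: "0 \<le> \<psi> 0" unfolding \<psi>_def using pt0 by (intro sum_nonneg mult_nonneg_nonneg) auto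
  define PW where "PW = (\<Sum>u\<in>S. pt \<xi> u * (if u \<in> W then 1 else 0))"
  have "\<epsilon> * PW \<le> (\<Sum>v\<in>S. pt \<xi> v * drift K N lam mu p (\<lambda>s. real (s 1)) v)"
  proof -
    have "\<epsilon> * PW = (\<Sum>v\<in>S. pt \<xi> v * (if v \<in> W then \<epsilon> else 0))"
      unfolding PW_def by (simp add: sum_distrib_left if_distrib mult_ac cong: if_cong)
    also have "\<dots> \<le> (\<Sum>v\<in>S. pt \<xi> v * drift K N lam mu p (\<lambda>s. real (s 1)) v)"
    proof (intro sum_mono mult_left_mono)
      fix v assume v: "v \<in> S"
      note VD = V_drift_pos[OF K2 N1 lam mu p1 p2 p12 pk v[unfolded S_def]]
      show "(if v \<in> W then \<epsilon> else 0) \<le> drift K N lam mu p (\<lambda>s. real (s 1)) v"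
        using VD unfolding W_def \<epsilon>_def by auto
      show "0 \<le> pt \<xi> v" using pt0 xi v by simp
    qed
    finally show ?thesis .
  qed
  then have "T * (\<epsilon> * PW) \<le> T * (\<Sum>v\<in>S. pt \<xi> v * drift K N lam mu p (\<lambda>s. real (s 1)) v)"
    using T0 by (intro mult_left_mono) auto
  also have "\<dots> = \<psi> T - \<psi> 0" using mv1 by simp
  finally have TePW: "T * (\<epsilon> * PW) \<le> real N" using \<psi>T \<psi>0 by linarith
  have PWlt: "PW < Bb"
  proof (rule ccontr)
    assume "\<not> PW < Bb"
    then have "T * (\<epsilon> * Bb) \<le> T * (\<epsilon> * PW)" using T0 e0 by (intro mult_left_mono) auto
    moreover have "T * (\<epsilon> * Bb) = real N + \<epsilon> * Bb" unfolding T_def using e0 Bb0 by (simp add: field_simps)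
    ultimately show False using TePW e0 Bb0 by (smt (verit) mult_pos_pos)
  qed
  have \<phi>mono: "\<phi> \<xi> \<le> \<phi> 0"
  proof -
    obtain z where z: "0 < z" "z < \<xi>" and mv2: "\<phi> \<xi> - \<phi> 0 = (\<xi> - 0) * (\<Sum>v\<in>S. pt z v * drift K N lam mu p G v)"
      using mvt_real[OF xi(1) d\<phi>] by blast
    have "(\<Sum>v\<in>S. pt z v * drift K N lam mu p G v) \<le> 0"
    proof (intro sum_nonpos mult_nonneg_nonpos)
      fix v assume v: "v \<in> S"
      show "0 \<le> pt z v" using pt0 z v by simp
      show "drift K N lam mu p G v \<le> 0" unfolding G_def
        by (rule G_drift[OF K2 N1 lam mu p1 p2 p12 pk v[unfolded S_def] \<rho>_def m_def \<beta>_def])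
    qed
    then have "\<xi> * (\<Sum>v\<in>S. pt z v * drift K N lam mu p G v) \<le> 0" using xi by (simp add: mult_nonneg_nonpos)
    then show ?thesis using mv2 by simp
  qed
  have \<phi>0: "\<phi> 0 = \<beta> ^ N"
  proof -
    have "\<phi> 0 = (\<Sum>u\<in>S. (if x0 = u then G u else 0))"
      unfolding \<phi>_def pt_def trans_fun_zero by (intro sum.cong) auto
    also have "\<dots> = G x0" using fin x0S by simp
    also have "\<dots> = \<beta> ^ N" by (simp add: G_def Gf_def x0_def)
    finally show ?thesis .
  qed
  have Gnn: "0 \<le> G u" for u using r0 b0 by (simp add: G_def Gf_def)
  have key: "1 - \<beta> ^ N - PW \<le> pt \<xi> (target N)"
  proof -
    have "1 = (\<Sum>u\<in>S. pt \<xi> u)" using pts xi by simp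
    also have "\<dots> = (\<Sum>u\<in>S. pt \<xi> u * (1 - G u)) + \<phi> \<xi>"
      unfolding \<phi>_def by (simp add: algebra_simps sum.distrib[symmetric])
    also have "(\<Sum>u\<in>S. pt \<xi> u * (1 - G u)) \<le> (\<Sum>u\<in>S. pt \<xi> u * ((if u = target N then 1 else 0) + (if u \<in> W then 1 else 0)))"
    proof (intro sum_mono mult_left_mono)
      fix u assume u: "u \<in> S"
      show "0 \<le> pt \<xi> u" using pt0 xi u by simp
      show "1 - G u \<le> (if u = target N then 1 else 0) + (if u \<in> W then 1 else 0)"
      proof (cases "u = target N \<or> u \<in> W")
        case True then show ?thesis using Gnn[of u] by (auto simp: W_def)
      next
        case False
        then have "u 0 = 0" "u 1 = 0" unfolding W_def by auto
        then have "G u = 1" by (simp add: G_def Gf_def)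
        then show ?thesis by simp
      qed
    qed
    also have "(\<Sum>u\<in>S. pt \<xi> u * ((if u = target N then 1 else 0) + (if u \<in> W then 1 else 0))) = pt \<xi> (target N) + PW"
    proof -
      have "(\<Sum>u\<in>S. pt \<xi> u * ((if u = target N then 1 else 0) + (if u \<in> W then 1 else 0)))
          = (\<Sum>u\<in>S. pt \<xi> u * (if u = target N then 1 else 0)) + PW"
        unfolding PW_def distrib_left sum.distrib ..
      also have "(\<Sum>u\<in>S. pt \<xi> u * (if u = target N then 1 else 0)) = (\<Sum>u\<in>S. if u = target N then pt \<xi> (target N) else 0)"
        by (intro sum.cong) auto
      also have "\<dots> = pt \<xi> (target N)" using fin tS by simp
      finally show ?thesis .
    qed
    finally show ?thesis using \<phi>mono \<phi>0 by linarith
  qed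
  have succ: "pt \<xi> (target N) \<le> measure M {\<omega>\<in>space M. \<forall>\<^sub>F t in at_top. X t \<omega> = target N}"
    unfolding pt_def using absorb_lb[OF tS Qt] xi by simp
  have bA: "\<beta> ^ N \<le> (p 1 / p 2) powr (- (1 - \<delta>) * (mu * p 1 / (real K * exp 1)) * real N)"
    unfolding \<beta>_def \<rho>_def m_def using bound_A[OF K2 mu d p2 p12 p1le] .
  show ?thesis using key succ bA PWlt unfolding Bb_def by linarith
qed


end
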